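(* Let $\mathcal R$ be a measure-preserving equivalence relation on a standard probability space $(X,\mu)$ and suppose there is $n\in\mathbb N$ such that every $\mathcal R$-class has cardinality at most $n$. Then the full group $[\mathcal R]$ is locally finite.
   Context: Null sets are ignored. $[\mathcal R]$ is the group of measure-preserving transformations $T$ of $X$ with $(x,T(x))\in\mathcal R$ for all $x$. A group is locally finite if every finitely generated subgroup is finite. *)

theory Defs
  imports "HOL-Probability.Probability"
begin

definition standard_prob_space :: "'a::polish_space measure \<Rightarrow> bool" where
  "standard_prob_space M \<longleftrightarrow> prob_space M \<and> sets M = sets borel"

definition borel_equiv_rel :: "'a::polish_space measure \<Rightarrow> ('a \<times> 'a) set \<Rightarrow> bool" where
  "borel_equiv_rel M R \<longleftrightarrow> equiv (space M) R \<and> R \<in> sets (M \<Otimes>\<^sub>M M)"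

definition measure_preserving_equiv :: "'a::polish_space measure \<Rightarrow> ('a \<times> 'a) set \<Rightarrow> bool" where
  "measure_preserving_equiv M R \<longleftrightarrow> borel_equiv_rel M R \<and>
     (\<forall>A f. A \<in> sets M \<longrightarrow> f \<in> measurable M M \<longrightarrow> inj_on f A \<longrightarrow>
        (\<forall>x\<in>A. (x, f x) \<in> R) \<longrightarrow> f ` A \<in> sets M \<longrightarrow> measure M (f ` A) = measure M A)"

definition measure_preserving :: "'a measure \<Rightarrow> ('a \<Rightarrow> 'a) set" where
  "measure_preserving M = {T. T \<in> measurable M M \<and> distr M M T = M}"

definition full_group :: "'a measure \<Rightarrow> ('a \<times> 'a) set \<Rightarrow> ('a \<Rightarrow> 'a) set" where
  "full_group M R = {T. T \<in> measure_preserving M \<and>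
     (\<exists>S \<in> measure_preserving M. (AE x in M. S (T x) = x) \<and> (AE x in M. T (S x) = x)) \<and>
     (AE x in M. (x, T x) \<in> R)}"

definition ae_eq :: "'a measure \<Rightarrow> ('a \<Rightarrow> 'a) \<Rightarrow> ('a \<Rightarrow> 'a) \<Rightarrow> bool" where
  "ae_eq M S T \<longleftrightarrow> (AE x in M. S x = T x)"

text \<open>Representatives of the subgroup generated by F (inside the group of measure-preserving
  transformations modulo null sets).\<close>
inductive_set generated :: "'a measure \<Rightarrow> ('a \<Rightarrow> 'a) set \<Rightarrow> ('a \<Rightarrow> 'a) set"
  for M F where
  gen_id: "id \<in> generated M F"
| gen_base: "T \<in> F \<Longrightarrow> T \<in> generated M F"
| gen_comp: "S \<in> generated M F \<Longrightarrow> T \<in> generated M F \<Longrightarrow> S \<circ> T \<in> generated M F"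
| gen_inv: "S \<in> generated M F \<Longrightarrow> U \<in> measure_preserving M \<Longrightarrow>
     (AE x in M. U (S x) = x) \<Longrightarrow> (AE x in M. S (U x) = x) \<Longrightarrow> U \<in> generated M F"

text \<open>A group of transformations (mod null sets) is locally finite if every finitely generated
  subgroup is finite, i.e. has only finitely many classes modulo null sets.\<close>
definition locally_finite_mod_null :: "'a measure \<Rightarrow> ('a \<Rightarrow> 'a) set \<Rightarrow> bool" where
  "locally_finite_mod_null M G \<longleftrightarrow>
     (\<forall>F. finite F \<longrightarrow> F \<subseteq> G \<longrightarrow>
        (\<exists>K. finite K \<and> K \<subseteq> generated M F \<and> (\<forall>S \<in> generated M F. \<exists>T\<in>K. ae_eq M S T)))"

end

theory Submission
  imports Defs
begin

locale lf_setup =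
  fixes M :: "'a measure" and R :: "('a \<times> 'a) set" and F :: "('a \<Rightarrow> 'a) set" and n :: nat
  assumes eqR: "equiv (space M) R"
    and finF: "finite F" and FG: "F \<subseteq> full_group M R"
    and cardR: "\<forall>x\<in>space M. finite (R `` {x}) \<and> card (R `` {x}) \<le> n"
begin

definition iv :: "('a \<Rightarrow> 'a) \<Rightarrow> 'a \<Rightarrow> 'a" where
  "iv T = (SOME S. S \<in> measure_preserving M \<and> (AE x in M. S (T x) = x) \<and> (AE x in M. T (S x) = x))"

lemma iv: assumes "T \<in> F"
  shows "iv T \<in> measure_preserving M \<and> (AE x in M. iv T (T x) = x) \<and> (AE x in M. T (iv T x) = x)"
proof -
  have "\<exists>S. S \<in> measure_preserving M \<and> (AE x in M. S (T x) = x) \<and> (AE x in M. T (S x) = x)"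
    using assms FG unfolding full_group_def by blast
  then show ?thesis unfolding iv_def by (rule someI_ex)
qed

lemma FT: "T \<in> F \<Longrightarrow> T \<in> measure_preserving M \<and> (AE x in M. (x, T x) \<in> R)"
  using FG unfolding full_group_def by blast

definition L :: "(('a \<Rightarrow> 'a) \<times> bool) set" where "L = F \<times> UNIV"

definition evl :: "('a \<Rightarrow> 'a) \<times> bool \<Rightarrow> 'a \<Rightarrow> 'a" where
  "evl a = (if snd a then fst a else iv (fst a))"

definition ev :: "(('a \<Rightarrow> 'a) \<times> bool) list \<Rightarrow> 'a \<Rightarrow> 'a" where
  "ev w = foldr (\<lambda>a f. evl a \<circ> f) w id"

lemma ev_Nil[simp]: "ev [] = id" and ev_Cons[simp]: "ev (a # w) = evl a \<circ> ev w"
  by (simp_all add: ev_def)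

lemma ev_append[simp]: "ev (u @ v) = ev u \<circ> ev v"
  by (induction u) auto

lemma mp_comp: "f \<in> measure_preserving M \<Longrightarrow> g \<in> measure_preserving M \<Longrightarrow> f \<circ> g \<in> measure_preserving M"
  unfolding measure_preserving_def
  by (auto simp: distr_distr[symmetric])

lemma mp_id: "id \<in> measure_preserving M"
  unfolding measure_preserving_def by (simp add: id_def)

lemma pull: assumes "T \<in> measure_preserving M" "AE y in M. P y"
  shows "AE x in M. P (T x)"
proof -
  have d: "distr M M T = M" using assms unfolding measure_preserving_def by simp
  have "AE y in distr M M T. P y" unfolding d by (rule assms(2))
  then show ?thesis using assms(1) unfolding measure_preserving_def by (auto intro: AE_distrD)
qed

lemma evl_mp: "a \<in> L \<Longrightarrow> evl a \<in> measure_preserving M"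
  using iv FT unfolding L_def evl_def by auto

lemma ev_mp: "w \<in> lists L \<Longrightarrow> ev w \<in> measure_preserving M"
  by (induction w) (auto intro: mp_comp mp_id evl_mp)

lemma evl_flip: "a \<in> L \<Longrightarrow> AE y in M. evl (fst a, \<not> snd a) (evl a y) = y"
  using iv unfolding L_def evl_def by auto

definition winv :: "(('a \<Rightarrow> 'a) \<times> bool) list \<Rightarrow> (('a \<Rightarrow> 'a) \<times> bool) list" where
  "winv w = rev (map (\<lambda>a. (fst a, \<not> snd a)) w)"

lemma winv: "w \<in> lists L \<Longrightarrow> winv w \<in> lists L \<and> (AE x in M. ev (winv w) (ev w x) = x)"
proof (induction w)
  case Nil
  then show ?case by (simp add: winv_def)
next
  case (Cons a u)
  then have aL: "a \<in> L" and uL: "u \<in> lists L" by auto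
  have wi: "winv (a # u) = winv u @ [(fst a, \<not> snd a)]" by (simp add: winv_def)
  have L1: "winv (a # u) \<in> lists L" using Cons aL unfolding wi L_def by auto
  have A1: "AE x in M. evl (fst a, \<not> snd a) (evl a (ev u x)) = ev u x"
    by (rule pull[OF ev_mp[OF uL] evl_flip[OF aL]])
  have A2: "AE x in M. ev (winv u) (ev u x) = x" using Cons uL by auto
  have "AE x in M. ev (winv (a # u)) (ev (a # u) x) = x"
    using A1 A2 by eventually_elim (simp add: wi)
  then show ?case using L1 by blast
qed

lemma Rsym: "(x, y) \<in> R \<Longrightarrow> (y, x) \<in> R" using eqR unfolding equiv_def sym_def by blast
lemma Rtrans: "(x, y) \<in> R \<Longrightarrow> (y, z) \<in> R \<Longrightarrow> (x, z) \<in> R"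
  using eqR unfolding equiv_def trans_def by blast
lemma Rrefl: "x \<in> space M \<Longrightarrow> (x, x) \<in> R" using eqR unfolding equiv_def refl_on_def by blast

lemma evl_R: assumes "a \<in> L" shows "AE x in M. (x, evl a x) \<in> R"
proof (cases "snd a")
  case True
  then show ?thesis using FT assms unfolding L_def evl_def by auto
next
  case False
  let ?T = "fst a"
  have TF: "?T \<in> F" using assms unfolding L_def by auto
  have "AE x in M. (iv ?T x, ?T (iv ?T x)) \<in> R"
    by (rule pull) (use iv[OF TF] FT[OF TF] in auto)
  moreover have "AE x in M. ?T (iv ?T x) = x" using iv[OF TF] by auto
  ultimately have "AE x in M. (x, iv ?T x) \<in> R" by eventually_elim (auto intro: Rsym)
  then show ?thesis using False unfolding evl_def by simp
qed

lemma ev_R: "w \<in> lists L \<Longrightarrow> AE x in M. (x, ev w x) \<in> R"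
proof (induction w)
  case Nil
  then show ?case by (auto intro: Rrefl)
next
  case (Cons a u)
  then have aL: "a \<in> L" and uL: "u \<in> lists L" by auto
  have "AE x in M. (ev u x, evl a (ev u x)) \<in> R"
    by (rule pull[OF ev_mp[OF uL] evl_R[OF aL]])
  moreover have "AE x in M. (x, ev u x) \<in> R" using Cons.IH uL by blast
  ultimately show ?case by eventually_elim (auto intro: Rtrans)
qed

lemma evl_gen: "a \<in> L \<Longrightarrow> evl a \<in> generated M F"
proof -
  assume "a \<in> L"
  then have TF: "fst a \<in> F" unfolding L_def by auto
  have "fst a \<in> generated M F" using TF by (rule gen_base)
  moreover have "iv (fst a) \<in> generated M F"
    by (rule gen_inv[OF \<open>fst a \<in> generated M F\<close>]) (use iv[OF TF] in auto)
  ultimately show ?thesis unfolding evl_def by auto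
qed

lemma ev_gen: "w \<in> lists L \<Longrightarrow> ev w \<in> generated M F"
  by (induction w) (auto intro: gen_id gen_comp evl_gen)

lemma gen_mp: "S \<in> generated M F \<Longrightarrow> S \<in> measure_preserving M"
proof (induction rule: generated.induct)
  case gen_id
  then show ?case by (rule mp_id)
next
  case (gen_base T)
  then show ?case using FT by blast
next
  case (gen_comp S T)
  then show ?case using mp_comp by blast
next
  case (gen_inv S U)
  then show ?case by blast
qed

lemma gen_word: "S \<in> generated M F \<Longrightarrow> \<exists>w\<in>lists L. AE x in M. S x = ev w x"
proof (induction rule: generated.induct)
  case gen_id
  then show ?case by (intro bexI[of _ "[]"]) auto
next
  case (gen_base T)
  then have "(T, True) \<in> L" unfolding L_def by auto
  then show ?case by (intro bexI[of _ "[(T, True)]"]) (auto simp: evl_def)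
next
  case (gen_comp S T)
  then obtain u v where uL: "u \<in> lists L" and vL: "v \<in> lists L"
    and AS: "AE x in M. S x = ev u x" and AT: "AE x in M. T x = ev v x" by blast
  have Tmp: "T \<in> measure_preserving M"
    using gen_comp.hyps(2) by (rule gen_mp)
  have "AE x in M. S (T x) = ev u (T x)" by (rule pull[OF Tmp AS])
  then have "AE x in M. (S \<circ> T) x = ev (u @ v) x" using AT by eventually_elim auto
  then show ?case using uL vL by (intro bexI[of _ "u @ v"]) auto
next
  case (gen_inv S U)
  then obtain w where wL: "w \<in> lists L" and AS: "AE x in M. S x = ev w x" by blast
  have "AE x in M. S (U x) = ev w (U x)" by (rule pull[OF gen_inv.hyps(2) AS])
  then have B1: "AE x in M. ev w (U x) = x" using gen_inv.hyps(4) by eventually_elim auto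
  have B2: "AE x in M. ev (winv w) (ev w (U x)) = U x"
    by (rule pull[OF gen_inv.hyps(2)]) (use winv[OF wL] in auto)
  have "AE x in M. U x = ev (winv w) x" using B1 B2 by eventually_elim auto
  then show ?case using winv[OF wL] by blast
qed

definition good :: "'a \<Rightarrow> bool" where
  "good x \<longleftrightarrow> x \<in> space M \<and> (\<forall>w\<in>lists L. (x, ev w x) \<in> R)"

lemma AE_good: "AE x in M. good x"
proof -
  have "countable L" unfolding L_def using finF by (simp add: countable_finite)
  then have "countable (lists L)" by simp
  then have "AE x in M. \<forall>w\<in>lists L. (x, ev w x) \<in> R"
    using ev_R by (subst AE_ball_countable) auto
  then show ?thesis unfolding good_def by auto
qed

definition orb :: "'a \<Rightarrow> 'a set" where "orb x = (\<lambda>w. ev w x) ` lists L"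

lemma O_props: assumes "good x" shows "finite (orb x)" "card (orb x) \<le> n" "x \<in> orb x"
proof -
  have sub: "orb x \<subseteq> R `` {x}" using assms unfolding good_def orb_def by auto
  have "x \<in> space M" using assms unfolding good_def by auto
  then have f: "finite (R `` {x})" "card (R `` {x}) \<le> n" using cardR by auto
  show "finite (orb x)" using finite_subset[OF sub f(1)] .
  show "card (orb x) \<le> n" using card_mono[OF f(1) sub] f(2) by simp
  show "x \<in> orb x" unfolding orb_def by (auto intro: image_eqI[of _ _ "[]"])
qed

lemma O_closed: "y \<in> orb x \<Longrightarrow> a \<in> L \<Longrightarrow> evl a y \<in> orb x"
  unfolding orb_def by (auto intro!: image_eqI[of _ _ "a # _"])

definition e :: "'a \<Rightarrow> nat \<Rightarrow> 'a" where
  "e x = (SOME h. bij_betw h {0..<card (orb x)} (orb x))"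

lemma e_bij: "good x \<Longrightarrow> bij_betw (e x) {0..<card (orb x)} (orb x)"
proof -
  assume g: "good x"
  obtain h where "bij_betw h {0..<card (orb x)} (orb x)"
    using ex_bij_betw_nat_finite[OF O_props(1)[OF g]] by blast
  then show ?thesis unfolding e_def
    using someI_ex[of "\<lambda>h. bij_betw h {0..<card (orb x)} (orb x)"] by blast
qed

definition sig :: "'a \<Rightarrow> ('a \<Rightarrow> 'a) \<times> bool \<Rightarrow> nat \<Rightarrow> nat" where
  "sig x = (\<lambda>a\<in>L. \<lambda>i\<in>{..<n}. if i < card (orb x)
      then the_inv_into {0..<card (orb x)} (e x) (evl a (e x i)) else 0)"

definition i0 :: "'a \<Rightarrow> nat" where "i0 x = the_inv_into {0..<card (orb x)} (e x) x"

definition aev :: "(('a \<Rightarrow> 'a) \<times> bool \<Rightarrow> nat \<Rightarrow> nat) \<Rightarrow> (('a \<Rightarrow> 'a) \<times> bool) list \<Rightarrow> nat \<Rightarrow> nat" where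
  "aev \<sigma> w = foldr (\<lambda>a f. \<sigma> a \<circ> f) w id"

lemma aev_Nil[simp]: "aev \<sigma> [] = id" and aev_Cons[simp]: "aev \<sigma> (a # w) = \<sigma> a \<circ> aev \<sigma> w"
  by (simp_all add: aev_def)

lemma key: assumes g: "good x"
  shows "w \<in> lists L \<Longrightarrow> i < card (orb x) \<Longrightarrow>
    aev (sig x) w i < card (orb x) \<and> ev w (e x i) = e x (aev (sig x) w i)"
proof (induction w)
  case Nil
  then show ?case by simp
next
  case (Cons a u)
  let ?m = "card (orb x)"
  have b: "bij_betw (e x) {0..<?m} (orb x)" by (rule e_bij[OF g])
  have aL: "a \<in> L" and uL: "u \<in> lists L" using Cons by auto
  define j where "j = aev (sig x) u i"
  have j: "j < ?m" "ev u (e x i) = e x j" using Cons uL unfolding j_def by auto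
  have mn: "?m \<le> n" by (rule O_props[OF g])
  have ej: "e x j \<in> orb x" using b j(1) by (auto simp: bij_betw_def)
  have y: "evl a (e x j) \<in> orb x" by (rule O_closed[OF ej aL])
  have sj: "sig x a j = the_inv_into {0..<?m} (e x) (evl a (e x j))"
    using aL j(1) mn unfolding sig_def by auto
  have inj: "inj_on (e x) {0..<?m}" and im: "e x ` {0..<?m} = orb x" using b by (auto simp: bij_betw_def)
  have k1: "the_inv_into {0..<?m} (e x) (evl a (e x j)) \<in> {0..<?m}"
    by (rule the_inv_into_into[OF inj]) (use y im in auto)
  have k2: "e x (the_inv_into {0..<?m} (e x) (evl a (e x j))) = evl a (e x j)"
    by (rule f_the_inv_into_f[OF inj]) (use y im in auto)
  show ?case using k1 k2 sj j unfolding j_def by simp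
qed

lemma ev_sig: assumes g: "good x" and wL: "w \<in> lists L"
  shows "ev w x = e x (aev (sig x) w (i0 x))"
proof -
  let ?m = "card (orb x)"
  have b: "bij_betw (e x) {0..<?m} (orb x)" by (rule e_bij[OF g])
  have inj: "inj_on (e x) {0..<?m}" and im: "e x ` {0..<?m} = orb x" using b by (auto simp: bij_betw_def)
  have xO: "x \<in> orb x" by (rule O_props[OF g])
  have "i0 x \<in> {0..<?m}" unfolding i0_def by (rule the_inv_into_into[OF inj]) (use xO im in auto)
  then have i: "i0 x < ?m" by simp
  have ex: "e x (i0 x) = x" unfolding i0_def by (rule f_the_inv_into_f[OF inj]) (use xO im in auto)
  show ?thesis using key[OF g wL i] ex by simp
qed

definition P where "P = (\<Pi>\<^sub>E a\<in>L. \<Pi>\<^sub>E i\<in>{..<n}. {..<n}) \<times> {..<n}"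

lemma sig_P: assumes g: "good x" shows "(sig x, i0 x) \<in> P"
proof -
  let ?m = "card (orb x)"
  have b: "bij_betw (e x) {0..<?m} (orb x)" by (rule e_bij[OF g])
  have inj: "inj_on (e x) {0..<?m}" and im: "e x ` {0..<?m} = orb x" using b by (auto simp: bij_betw_def)
  have xO: "x \<in> orb x" by (rule O_props[OF g])
  have mn: "?m \<le> n" by (rule O_props[OF g])
  have "i0 x \<in> {0..<?m}" unfolding i0_def by (rule the_inv_into_into[OF inj]) (use xO im in auto)
  then have i: "i0 x < ?m" by simp
  have "sig x \<in> (\<Pi>\<^sub>E a\<in>L. \<Pi>\<^sub>E i\<in>{..<n}. {..<n})"
  proof -
    have "the_inv_into {0..<?m} (e x) (evl a (e x i)) < ?m" if "a \<in> L" "i < ?m" for a i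
    proof -
      have "e x i \<in> orb x" using b that(2) by (auto simp: bij_betw_def)
      then have "evl a (e x i) \<in> orb x" by (rule O_closed) (rule that(1))
      then have "the_inv_into {0..<?m} (e x) (evl a (e x i)) \<in> {0..<?m}"
        by (intro the_inv_into_into[OF inj]) (use im in auto)
      then show ?thesis by simp
    qed
    note bd = this
    have "(if i < ?m then the_inv_into {0..<?m} (e x) (evl a (e x i)) else 0) \<in> {..<n}"
      if "a \<in> L" "i \<in> {..<n}" for a i
    proof (cases "i < ?m")
      case True
      then show ?thesis using bd[OF that(1) True] mn by simp
    next
      case False
      then show ?thesis using i mn by simp
    qed
    then show ?thesis unfolding sig_def restrict_PiE_iff by blast
  qed
  moreover have "i0 x \<in> {..<n}" using i mn by simp
  ultimately show ?thesis unfolding P_def by blast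
qed

lemma aev_bound0: "\<forall>a\<in>L. \<forall>i<n. \<sigma> a i < n \<Longrightarrow> w \<in> lists L \<Longrightarrow> i < n \<Longrightarrow> aev \<sigma> w i < n"
  by (induction w arbitrary: i) auto

lemma aev_bound: "\<sigma> \<in> (\<Pi>\<^sub>E a\<in>L. \<Pi>\<^sub>E i\<in>{..<n}. {..<n}) \<Longrightarrow> w \<in> lists L \<Longrightarrow> i < n \<Longrightarrow> aev \<sigma> w i < n"
  by (rule aev_bound0) (auto dest: PiE_mem)

definition Psi where "Psi w = (\<lambda>p\<in>P. aev (fst p) w (snd p))"

lemma finite_words: "\<exists>W. finite W \<and> W \<subseteq> lists L \<and> (\<forall>w\<in>lists L. \<exists>w'\<in>W. AE x in M. ev w x = ev w' x)"
proof -
  have fP: "finite P" unfolding P_def using finF unfolding L_def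
    by (intro finite_cartesian_product finite_PiE) auto
  have "Psi ` lists L \<subseteq> (\<Pi>\<^sub>E p\<in>P. {..<n})"
  proof
    fix f assume "f \<in> Psi ` lists L"
    then obtain w where w: "w \<in> lists L" "f = Psi w" by blast
    show "f \<in> (\<Pi>\<^sub>E p\<in>P. {..<n})"
      unfolding w Psi_def restrict_PiE_iff
    proof
      fix p assume "p \<in> P"
      then have "fst p \<in> (\<Pi>\<^sub>E a\<in>L. \<Pi>\<^sub>E i\<in>{..<n}. {..<n})" "snd p < n"
        unfolding P_def mem_Times_iff lessThan_iff by blast+
      then show "aev (fst p) w (snd p) \<in> {..<n}" using aev_bound[OF _ w(1)] by simp
    qed
  qed
  moreover have "finite (\<Pi>\<^sub>E p\<in>P. {..<n})" using fP by (intro finite_PiE) auto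
  ultimately have fin: "finite (Psi ` lists L)" by (rule finite_subset)
  define ch where "ch \<phi> = (SOME w. w \<in> lists L \<and> Psi w = \<phi>)" for \<phi>
  have ch: "ch (Psi w) \<in> lists L \<and> Psi (ch (Psi w)) = Psi w" if "w \<in> lists L" for w
    unfolding ch_def by (rule someI_ex) (use that in blast)
  define W where "W = ch ` Psi ` lists L"
  have "\<exists>w'\<in>W. AE x in M. ev w x = ev w' x" if wL: "w \<in> lists L" for w
  proof (intro bexI)
    let ?w' = "ch (Psi w)"
    show "?w' \<in> W" unfolding W_def using wL by auto
    show "AE x in M. ev w x = ev ?w' x"
      using AE_good
    proof eventually_elim
      case (elim x)
      have p: "(sig x, i0 x) \<in> P" by (rule sig_P[OF elim])
      have "Psi w (sig x, i0 x) = Psi ?w' (sig x, i0 x)" using ch[OF wL] by simp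
      then have "aev (sig x) w (i0 x) = aev (sig x) ?w' (i0 x)" using p unfolding Psi_def by simp
      then show ?case using ev_sig[OF elim wL] ev_sig[OF elim] ch[OF wL] by simp
    qed
  qed
  moreover have "W \<subseteq> lists L" unfolding W_def using ch by auto
  moreover have "finite W" unfolding W_def using fin by simp
  ultimately show ?thesis by blast
qed

end

theorem mainTheorem9:
  fixes M :: "'a::polish_space measure" and R :: "('a \<times> 'a) set" and n :: nat
  assumes "standard_prob_space M"
    and "measure_preserving_equiv M R"
    and "\<forall>x \<in> space M. finite (R `` {x}) \<and> card (R `` {x}) \<le> n"
  shows "locally_finite_mod_null M (full_group M R)"
  unfolding locally_finite_mod_null_def
proof (intro allI impI)
  fix F assume fF: "finite F" and FG: "F \<subseteq> full_group M R"
  have eqR: "equiv (space M) R"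
    using assms(2) unfolding measure_preserving_equiv_def borel_equiv_rel_def by blast
  interpret lf_setup M R F n
    using eqR fF FG assms(3) by unfold_locales auto
  obtain W where W: "finite W" "W \<subseteq> lists L"
    "\<forall>w\<in>lists L. \<exists>w'\<in>W. AE x in M. ev w x = ev w' x"
    using finite_words by blast
  show "\<exists>K. finite K \<and> K \<subseteq> generated M F \<and> (\<forall>S \<in> generated M F. \<exists>T\<in>K. ae_eq M S T)"
  proof (intro exI conjI ballI)
    show "finite (ev ` W)" using W by simp
    show "ev ` W \<subseteq> generated M F" using W(2) ev_gen by blast
    fix S assume "S \<in> generated M F"
    then obtain w where wL: "w \<in> lists L" and A: "AE x in M. S x = ev w x"
      using gen_word by blast
    obtain w' where w': "w' \<in> W" "AE x in M. ev w x = ev w' x" using W wL by blast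
    have "AE x in M. S x = ev w' x" using A w'(2) by eventually_elim simp
    then show "\<exists>T\<in>ev ` W. ae_eq M S T" using w'(1) unfolding ae_eq_def by blast
  qed
qed

end
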